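(* Let $d,k$ be positive integers and $z_1,\dots,z_d$ integers. For $1\le i\le d$ let $A_i=\{z_i+1,\dots,z_i+k\}$ and $B_i=\{z_i+1,\dots,z_i+k-1\}$ (with $B_i=\varnothing$ if $k=1$). Let $U\subseteq\mathbb{R}^d$ satisfy: (1) $U$ is non-empty; (2) $U$ is convex; (3) for each $1\le i\le d$, $\pi_i(U)=\pi_i(H^i_{z_i+1}\cap U)$, where $\pi_i:\mathbb{R}^d\to\mathbb{R}^{d-1}$ deletes the $i$-th coordinate and $H^i_x\subseteq\mathbb{R}^d$ is the hyperplane $\{x_i=x\}$. Then $$(k-1)^d\Big|U\cap\prod_{i=1}^d A_i\Big|\le k^d\Big|U\cap\prod_{i=1}^d B_i\Big|.$$ *)

theory Defs
  imports "HOL-Analysis.Analysis"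
begin

text \<open>We represent R^(d-1)
  as the vectors of R^d whose i-th coordinate is 0 (this is a linear bijection
  onto R^(d-1), so equalities of images are unaffected).\<close>
definition delete_coord :: "'n \<Rightarrow> real^'n \<Rightarrow> real^'n" where
  "delete_coord i x = (\<chi> j. if j = i then 0 else x $ j)"

definition coord_hyperplane :: "'n \<Rightarrow> real \<Rightarrow> (real^'n) set" where
  "coord_hyperplane i c = {x. x $ i = c}"

definition int_box :: "('n \<Rightarrow> int) \<Rightarrow> ('n \<Rightarrow> int) \<Rightarrow> (real^'n) set" where
  "int_box lo hi = {x. \<forall>i. \<exists>a\<in>{lo i..hi i}. x $ i = of_int a}"

end

theory Submission
  imports Defs
begin

definition TT :: "(('n::finite \<Rightarrow> int) \<Rightarrow> bool) \<Rightarrow> ('n \<Rightarrow> int) \<Rightarrow> int \<Rightarrow> 'n set \<Rightarrow> ('n \<Rightarrow> int) set" where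
  "TT P a k J = {f. P f \<and> (\<forall>i. a i \<le> f i \<and> f i \<le> a i + k - 1 - (if i \<in> J then 1 else 0))}"

lemma TT_finite: "finite (TT P a k J)"
proof -
  have "TT P a k J \<subseteq> PiE UNIV (\<lambda>i. {a i .. a i + k})"
  proof
    fix f assume "f \<in> TT P a k J"
    then have "\<forall>i. a i \<le> f i \<and> f i \<le> a i + k - 1 - (if i \<in> J then 1 else 0)"
      unfolding TT_def by auto
    then have "\<forall>i. f i \<in> {a i .. a i + k}" by (smt (verit) atLeastAtMost_iff)
    then show "f \<in> PiE UNIV (\<lambda>i. {a i .. a i + k})" by (simp add: PiE_def Pi_def extensional_def)
  qed
  moreover have "finite (PiE UNIV (\<lambda>i. {a i .. a i + k}))"
    by (rule finite_PiE) auto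
  ultimately show ?thesis by (rule finite_subset)
qed

lemma TT_step:
  assumes down: "\<And>f i c. P f \<Longrightarrow> a i \<le> c \<Longrightarrow> c \<le> f i \<Longrightarrow> P (f(i:=c))"
    and k: "k \<ge> 1" and j: "j \<notin> J"
  shows "(k-1) * int (card (TT P a k J)) \<le> k * int (card (TT P a k (insert j J)))"
proof -
  define T' where "T' = TT P a k (insert j J)"
  define D where "D = {f \<in> TT P a k J. f j = a j + k - 1}"
  have TJ: "TT P a k J = T' \<union> D" using j unfolding T'_def D_def TT_def by force
  have disj: "T' \<inter> D = {}" unfolding T'_def D_def TT_def by auto
  have fD: "finite D" unfolding D_def using TT_finite[of P a k J] by auto
  have fT: "finite T'" unfolding T'_def by (rule TT_finite)
  define g where "g = (\<lambda>(f::'a \<Rightarrow> int, c::int). f(j:=c))"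
  have inj: "inj_on g (D \<times> {a j .. a j + k - 2})"
  proof (rule inj_onI)
    fix x y assume x: "x \<in> D \<times> {a j .. a j + k - 2}" and y: "y \<in> D \<times> {a j .. a j + k - 2}"
      and e: "g x = g y"
    obtain f c where xf: "x = (f,c)" by fastforce
    obtain f' c' where yf: "y = (f',c')" by fastforce
    have "f j = f' j" using x y xf yf unfolding D_def by auto
    moreover have "f(j:=c) = f'(j:=c')" using e xf yf g_def by simp
    ultimately have "f = f'" "c = c'" by (metis fun_upd_triv fun_upd_upd, metis fun_upd_same)
    thus "x = y" using xf yf by simp
  qed
  have img: "g ` (D \<times> {a j .. a j + k - 2}) \<subseteq> T'"
  proof
    fix y assume "y \<in> g ` (D \<times> {a j .. a j + k - 2})"
    then obtain f c where f: "f \<in> D" and c: "c \<in> {a j .. a j + k - 2}" and y: "y = f(j:=c)"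
      unfolding g_def by auto
    have "P f" "f j = a j + k - 1" "\<forall>i. a i \<le> f i \<and> f i \<le> a i + k - 1 - (if i \<in> J then 1 else 0)"
      using f unfolding D_def TT_def by auto
    then have "P y" using down[of f j c] c y by auto
    then show "y \<in> T'" unfolding T'_def TT_def using c y
      \<open>\<forall>i. a i \<le> f i \<and> f i \<le> a i + k - 1 - (if i \<in> J then 1 else 0)\<close> by auto
  qed
  have "card (D \<times> {a j .. a j + k - 2}) \<le> card T'"
    using card_inj_on_le[OF inj img fT] .
  hence "card D * nat (k - 1) \<le> card T'"
    using k by (simp add: card_cartesian_product)
  hence "int (card D * nat (k - 1)) \<le> int (card T')" by linarith
  hence "int (card D) * (k - 1) \<le> int (card T')" using k by simp
  moreover have "card (TT P a k J) = card T' + card D"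
    using TJ disj fD fT by (simp add: card_Un_disjoint)
  ultimately show ?thesis unfolding T'_def[symmetric] by (simp add: algebra_simps)
qed

lemma TT_main:
  assumes down: "\<And>f i c. P f \<Longrightarrow> a i \<le> c \<Longrightarrow> c \<le> f i \<Longrightarrow> P (f(i:=c))"
    and k: "k \<ge> 1" and J: "finite J"
  shows "(k-1)^card J * int (card (TT P a k {})) \<le> k^card J * int (card (TT P a k J))"
  using J
proof (induction J rule: finite_induct)
  case empty then show ?case by simp
next
  case (insert j J)
  have "(k-1)^card (insert j J) * int (card (TT P a k {}))
      = (k-1) * ((k-1)^card J * int (card (TT P a k {})))" using insert by simp
  also have "\<dots> \<le> (k-1) * (k^card J * int (card (TT P a k J)))"
    using insert k by (intro mult_left_mono) auto
  also have "\<dots> = k^card J * ((k-1) * int (card (TT P a k J)))" by (simp add: algebra_simps)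
  also have "\<dots> \<le> k^card J * (k * int (card (TT P a k (insert j J))))"
    using TT_step[of P a, OF down k insert(2)] k by (intro mult_left_mono) auto
  also have "\<dots> = k^card (insert j J) * int (card (TT P a k (insert j J)))"
    using insert by simp
  finally show ?case .
qed

definition vecf :: "('n::finite \<Rightarrow> int) \<Rightarrow> real^'n" where
  "vecf f = (\<chi> i. of_int (f i))"

lemma vecf_inj: "inj vecf"
  by (rule injI) (auto simp: vecf_def vec_eq_iff)

lemma box_eq:
  "U \<inter> int_box lo hi = vecf ` {f. vecf f \<in> U \<and> (\<forall>i. lo i \<le> f i \<and> f i \<le> hi i)}"
proof
  show "U \<inter> int_box lo hi \<subseteq> vecf ` {f. vecf f \<in> U \<and> (\<forall>i. lo i \<le> f i \<and> f i \<le> hi i)}"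
  proof
    fix x assume x: "x \<in> U \<inter> int_box lo hi"
    define f where "f = (\<lambda>i. \<lfloor>x $ i\<rfloor>)"
    have h: "\<forall>i. \<exists>a\<in>{lo i..hi i}. x $ i = of_int a" using x unfolding int_box_def by auto
    have hh: "\<And>i. x $ i = of_int \<lfloor>x $ i\<rfloor>" using h by (metis floor_of_int)
    have xf: "x = vecf f"
      unfolding vecf_def vec_eq_iff f_def using hh by simp
    have "\<forall>i. lo i \<le> f i \<and> f i \<le> hi i"
    proof
      fix i obtain b where "b \<in> {lo i..hi i}" "x $ i = of_int b" using h by blast
      then show "lo i \<le> f i \<and> f i \<le> hi i" unfolding f_def by simp
    qed
    then show "x \<in> vecf ` {f. vecf f \<in> U \<and> (\<forall>i. lo i \<le> f i \<and> f i \<le> hi i)}"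
      using x xf by auto
  qed
  show "vecf ` {f. vecf f \<in> U \<and> (\<forall>i. lo i \<le> f i \<and> f i \<le> hi i)} \<subseteq> U \<inter> int_box lo hi"
    unfolding int_box_def vecf_def by auto
qed

theorem lemma2p4:
  fixes k :: nat and z :: "'n::finite \<Rightarrow> int" and U :: "(real^'n) set"
  assumes "k \<ge> 1"
    and "U \<noteq> {}"
    and "convex U"
    and "\<And>i. delete_coord i ` U
               = delete_coord i ` (coord_hyperplane i (of_int (z i + 1)) \<inter> U)"
  shows "(k - 1) ^ CARD('n) * card (U \<inter> int_box (\<lambda>i. z i + 1) (\<lambda>i. z i + int k))
         \<le> k ^ CARD('n) * card (U \<inter> int_box (\<lambda>i. z i + 1) (\<lambda>i. z i + int k - 1))"
proof -
  define P where "P = (\<lambda>f. vecf f \<in> U)"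
  define a where "a = (\<lambda>i. z i + 1)"
  have down: "P (f(i:=c))" if Pf: "P f" and c1: "a i \<le> c" and c2: "c \<le> f i" for f i c
  proof -
    have "delete_coord i (vecf f) \<in> delete_coord i ` (coord_hyperplane i (of_int (z i + 1)) \<inter> U)"
      using assms(4)[of i] Pf P_def by auto
    then obtain y where y: "y \<in> U" "y $ i = of_int (z i + 1)"
      "delete_coord i y = delete_coord i (vecf f)"
      unfolding coord_hyperplane_def by auto
    have yj: "y $ j = of_int (f j)" if "j \<noteq> i" for j
      using arg_cong[OF y(3), of "\<lambda>v. v $ j"] that by (simp add: delete_coord_def vecf_def)
    show ?thesis
    proof (cases "f i = a i")
      case True then have "c = f i" using c1 c2 by simp
      then show ?thesis using Pf by simp
    next
      case False
      then have lt: "a i < f i" using c1 c2 by simp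
      define t where "t = real_of_int (c - a i) / real_of_int (f i - a i)"
      have t0: "t \<ge> 0" "t \<le> 1" unfolding t_def using c1 c2 lt by auto
      have eq: "vecf (f(i:=c)) = t *\<^sub>R vecf f + (1 - t) *\<^sub>R y"
      proof (subst vec_eq_iff, intro allI)
        fix j show "vecf (f(i:=c)) $ j = (t *\<^sub>R vecf f + (1 - t) *\<^sub>R y) $ j"
        proof (cases "j = i")
          case True
          have "real_of_int c = t * real_of_int (f i) + (1 - t) * real_of_int (a i)"
          proof -
            have d: "real_of_int (f i) - real_of_int (a i) > 0" using lt by simp
            have "t * (real_of_int (f i) - real_of_int (a i)) = real_of_int c - real_of_int (a i)"
              unfolding t_def using d by simp
            then show ?thesis by (simp add: algebra_simps)
          qed
          then show ?thesis using True y(2) by (simp add: vecf_def a_def)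
        next
          case False then show ?thesis using yj[OF False] by (simp add: vecf_def algebra_simps)
        qed
      qed
      have "t *\<^sub>R vecf f + (1 - t) *\<^sub>R y \<in> U"
        using assms(3) Pf y(1) t0 unfolding convex_def P_def by auto
      then show ?thesis using eq P_def by simp
    qed
  qed
  have main: "(int k - 1) ^ card (UNIV::'n set) * int (card (TT P a (int k) {}))
      \<le> int k ^ card (UNIV::'n set) * int (card (TT P a (int k) UNIV))"
    using TT_main[of P a, OF down, of "int k" UNIV] assms(1) by simp
  have A: "U \<inter> int_box (\<lambda>i. z i + 1) (\<lambda>i. z i + int k) = vecf ` TT P a (int k) {}"
    unfolding box_eq TT_def P_def a_def by simp
  have B: "U \<inter> int_box (\<lambda>i. z i + 1) (\<lambda>i. z i + int k - 1) = vecf ` TT P a (int k) UNIV"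
    unfolding box_eq TT_def P_def a_def by (simp add: algebra_simps)
  have cA: "card (U \<inter> int_box (\<lambda>i. z i + 1) (\<lambda>i. z i + int k)) = card (TT P a (int k) {})"
    unfolding A by (rule card_image) (rule inj_on_subset[OF vecf_inj], simp)
  have cB: "card (U \<inter> int_box (\<lambda>i. z i + 1) (\<lambda>i. z i + int k - 1)) = card (TT P a (int k) UNIV)"
    unfolding B by (rule card_image) (rule inj_on_subset[OF vecf_inj], simp)
  have "int ((k - 1) ^ CARD('n) * card (TT P a (int k) {}))
        \<le> int (k ^ CARD('n) * card (TT P a (int k) UNIV))"
    using main assms(1) by (simp add: of_nat_diff)
  then show ?thesis unfolding cA cB by linarith
qed

end
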